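(* Let $\mathtt{L}\in\mathcal{L}$ be a line of $\mathbb{S}$ and let $\alpha\in P\cup P'$. If $\alpha$ has distance $3$ (in $\mathbb{S}$) from two points of $\mathtt{L}$, then $\alpha$ has distance $2$ from the third point of $\mathtt{L}$.
   Context: Let $S=(P,L)$ and $S'=(P',L')$ be generalized quadrangles of order $(2,2)$ (every line has 3 points, every point lies on 3 lines, and for each point $x$ and line $l\not\ni x$ exactly one point of $l$ is collinear with $x$), with an isomorphism $x\mapsto x'$ from $S$ to $S'$. In a point-line geometry, $x^{\perp}$ is $x$ together with all points collinear with $x$, and $A^{\perp}=\bigcap_{a\in A}a^{\perp}$. A triad is a set of three pairwise non-collinear points, complete if $|T^{\perp}|=3$. Let $\mathcal{P}=\{(x,y')\in P\times P':y'\in x'^{\perp}\}$ and $\mathcal{L}$ the set of all $3$-subsets $\{(x,u'),(y,v'),(z,w')\}$ of $\mathcal{P}$ where $T=\{x,y,z\}$ (three distinct points) is a line or complete triad of $S$ and $\{u',v',w'\}=T'^{\perp}$ in $S'$ with $u',v',w'$ distinct. The geometry $\mathbb{S}=(\mathbb{P},\mathbb{L})$ has point set $\mathbb{P}=\mathcal{P}\cup P\cup P'$ (disjoint union) and line set $\mathcal{L}\cup\{\{x,(x,u'),u'\}:(x,u')\in\mathcal{P}\}$. Distances are in the collinearity graph of $\mathbb{S}$. *)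

theory Defs
  imports Main
begin

definition collinear :: "'a set \<Rightarrow> 'a set set \<Rightarrow> 'a \<Rightarrow> 'a \<Rightarrow> bool" where
  "collinear P L x y \<longleftrightarrow> x \<noteq> y \<and> x \<in> P \<and> y \<in> P \<and> (\<exists>l\<in>L. x \<in> l \<and> y \<in> l)"

definition perp :: "'a set \<Rightarrow> 'a set set \<Rightarrow> 'a \<Rightarrow> 'a set" where
  "perp P L x = insert x {y. collinear P L x y}"

definition setperp :: "'a set \<Rightarrow> 'a set set \<Rightarrow> 'a set \<Rightarrow> 'a set" where
  "setperp P L A = {y \<in> P. \<forall>a\<in>A. y \<in> perp P L a}"

definition gq22 :: "'a set \<Rightarrow> 'a set set \<Rightarrow> bool" where
  "gq22 P L \<longleftrightarrow>
     (\<forall>l\<in>L. l \<subseteq> P \<and> card l = 3) \<and>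
     (\<forall>x\<in>P. card {l\<in>L. x \<in> l} = 3) \<and>
     (\<forall>x\<in>P. \<forall>l\<in>L. x \<notin> l \<longrightarrow> (\<exists>!y. y \<in> l \<and> collinear P L x y))"

definition triad :: "'a set \<Rightarrow> 'a set set \<Rightarrow> 'a set \<Rightarrow> bool" where
  "triad P L T \<longleftrightarrow> (\<exists>x y z. T = {x, y, z} \<and> x \<in> P \<and> y \<in> P \<and> z \<in> P \<and>
      x \<noteq> y \<and> x \<noteq> z \<and> y \<noteq> z \<and>
      \<not> collinear P L x y \<and> \<not> collinear P L x z \<and> \<not> collinear P L y z)"

definition complete_triad :: "'a set \<Rightarrow> 'a set set \<Rightarrow> 'a set \<Rightarrow> bool" where
  "complete_triad P L T \<longleftrightarrow> triad P L T \<and> card (setperp P L T) = 3"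

definition geom_iso :: "('a \<Rightarrow> 'b) \<Rightarrow> 'a set \<Rightarrow> 'a set set \<Rightarrow> 'b set \<Rightarrow> 'b set set \<Rightarrow> bool" where
  "geom_iso f P L P' L' \<longleftrightarrow> bij_betw f P P' \<and> (\<forall>l. l \<subseteq> P \<longrightarrow> (l \<in> L \<longleftrightarrow> f ` l \<in> L'))"

text \<open>Points of \<S>: disjoint union of the pairs, P and P'.\<close>
datatype ('a, 'b) bpt = BPair 'a 'b | BS 'a | BS' 'b

definition calP :: "'a set \<Rightarrow> 'a set set \<Rightarrow> 'b set \<Rightarrow> 'b set set \<Rightarrow> ('a \<Rightarrow> 'b) \<Rightarrow> ('a \<times> 'b) set" where
  "calP P L P' L' f = {(x, u). x \<in> P \<and> u \<in> perp P' L' (f x)}"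

definition calL :: "'a set \<Rightarrow> 'a set set \<Rightarrow> 'b set \<Rightarrow> 'b set set \<Rightarrow> ('a \<Rightarrow> 'b) \<Rightarrow> ('a, 'b) bpt set set" where
  "calL P L P' L' f =
    {{BPair x u, BPair y v, BPair z w} | x y z u v w.
        (x, u) \<in> calP P L P' L' f \<and> (y, v) \<in> calP P L P' L' f \<and> (z, w) \<in> calP P L P' L' f \<and>
        x \<noteq> y \<and> x \<noteq> z \<and> y \<noteq> z \<and>
        ({x, y, z} \<in> L \<or> complete_triad P L {x, y, z}) \<and>
        u \<noteq> v \<and> u \<noteq> w \<and> v \<noteq> w \<and>
        {u, v, w} = setperp P' L' (f ` {x, y, z})}"

definition bpoints :: "'a set \<Rightarrow> 'a set set \<Rightarrow> 'b set \<Rightarrow> 'b set set \<Rightarrow> ('a \<Rightarrow> 'b) \<Rightarrow> ('a, 'b) bpt set" where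
  "bpoints P L P' L' f =
     (\<lambda>(x, u). BPair x u) ` calP P L P' L' f \<union> BS ` P \<union> BS' ` P'"

definition blines :: "'a set \<Rightarrow> 'a set set \<Rightarrow> 'b set \<Rightarrow> 'b set set \<Rightarrow> ('a \<Rightarrow> 'b) \<Rightarrow> ('a, 'b) bpt set set" where
  "blines P L P' L' f =
     calL P L P' L' f \<union> {{BS x, BPair x u, BS' u} | x u. (x, u) \<in> calP P L P' L' f}"

definition badj :: "'a set \<Rightarrow> 'a set set \<Rightarrow> 'b set \<Rightarrow> 'b set set \<Rightarrow> ('a \<Rightarrow> 'b) \<Rightarrow> (('a, 'b) bpt \<times> ('a, 'b) bpt) set" where
  "badj P L P' L' f = {(a, b). a \<noteq> b \<and> (\<exists>l\<in>blines P L P' L' f. a \<in> l \<and> b \<in> l)}"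

definition has_dist :: "('c \<times> 'c) set \<Rightarrow> 'c \<Rightarrow> 'c \<Rightarrow> nat \<Rightarrow> bool" where
  "has_dist R a b n \<longleftrightarrow> (a, b) \<in> R ^^ n \<and> (\<forall>m<n. (a, b) \<notin> R ^^ m)"

end

theory Submission imports Defs begin

locale gq = fixes P :: "'a set" and L :: "'a set set" assumes gq: "gq22 P L"
begin

abbreviation col where "col \<equiv> collinear P L"

lemma gqA: "\<forall>l\<in>L. l \<subseteq> P \<and> card l = 3"
  using gq[unfolded gq22_def] by (rule conjunct1)
lemma gqB: "\<forall>x\<in>P. card {l\<in>L. x \<in> l} = 3"
  using gq[unfolded gq22_def] by (rule conjunct2[THEN conjunct1])
lemma gqC: "\<forall>x\<in>P. \<forall>l\<in>L. x \<notin> l \<longrightarrow> (\<exists>!y. y \<in> l \<and> col x y)"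
  using gq[unfolded gq22_def] by (rule conjunct2[THEN conjunct2])
lemma lineP: "l \<in> L \<Longrightarrow> l \<subseteq> P" using gqA by blast
lemma line3: "l \<in> L \<Longrightarrow> card l = 3" using gqA by blast
lemma pt3: "x \<in> P \<Longrightarrow> card {l\<in>L. x \<in> l} = 3" using gqB by blast
lemma ax: "x \<in> P \<Longrightarrow> l \<in> L \<Longrightarrow> x \<notin> l \<Longrightarrow> \<exists>!y. y \<in> l \<and> col x y"
  using gqC by blast
lemma col_sym: "col x y \<Longrightarrow> col y x" unfolding collinear_def by blast
lemma colP: "col x y \<Longrightarrow> x \<in> P \<and> y \<in> P \<and> x \<noteq> y" unfolding collinear_def by blast
lemma col_line: "col x y \<Longrightarrow> \<exists>l\<in>L. x \<in> l \<and> y \<in> l" unfolding collinear_def by blast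
lemma on_line: "l \<in> L \<Longrightarrow> x \<in> l \<Longrightarrow> y \<in> l \<Longrightarrow> x \<noteq> y \<Longrightarrow> col x y"
  unfolding collinear_def using lineP by blast
lemma uniq: "x \<in> P \<Longrightarrow> l \<in> L \<Longrightarrow> x \<notin> l \<Longrightarrow> c1 \<in> l \<Longrightarrow> c2 \<in> l \<Longrightarrow> col x c1 \<Longrightarrow> col x c2 \<Longrightarrow> c1 = c2"
  using ax[of x l] by (metis (no_types, lifting))
lemma finl: "l \<in> L \<Longrightarrow> finite l" by (rule card_ge_0_finite) (simp add: line3)

lemma line_unique:
  assumes "p \<noteq> q" "p \<in> l1" "q \<in> l1" "p \<in> l2" "q \<in> l2" "l1 \<in> L" "l2 \<in> L"
  shows "l1 = l2"
proof (rule ccontr)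
  assume ne: "l1 \<noteq> l2"
  have "\<not> l1 \<subseteq> l2"
  proof
    assume sub: "l1 \<subseteq> l2"
    have "l1 = l2" using card_subset_eq[OF finl[OF assms(7)] sub] line3[OF assms(6)] line3[OF assms(7)] by simp
    then show False using ne by blast
  qed
  then obtain r where r: "r \<in> l1" "r \<notin> l2" by blast
  have "r \<noteq> p" "r \<noteq> q" using r assms by auto
  then have "col r p" "col r q" using on_line[OF assms(6) r(1)] assms(2,3) by auto
  moreover have "r \<in> P" using lineP[OF assms(6)] r(1) by blast
  ultimately show False using uniq[of r l2 p q] r(2) assms(1,4,5,7) by blast
qed

lemma triangle:
  assumes "col p q" "col q r" "col p r"
  shows "\<exists>l\<in>L. p \<in> l \<and> q \<in> l \<and> r \<in> l"
proof -
  obtain l where l: "l \<in> L" "p \<in> l" "q \<in> l" using col_line assms by blast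
  have "r \<in> l"
  proof (rule ccontr)
    assume "r \<notin> l"
    moreover have "r \<in> P" using colP[OF assms(2)] by blast
    ultimately have "p = q" using uniq[of r l p q] l col_sym[OF assms(3)] col_sym[OF assms(2)] by blast
    then show False using colP[OF assms(1)] by blast
  qed
  then show ?thesis using l by blast
qed

lemma noncol:
  assumes "\<not> col t1 t2" "col u t1" "col u t2" "col v t1" "col v t2" "u \<noteq> v" "t1 \<noteq> t2"
  shows "\<not> col u v"
proof
  assume uv: "col u v"
  obtain l1 where l1: "l1 \<in> L" "u \<in> l1" "v \<in> l1" "t1 \<in> l1"
    using triangle[OF uv assms(4) assms(2)] by blast
  obtain l2 where l2: "l2 \<in> L" "u \<in> l2" "v \<in> l2" "t2 \<in> l2"
    using triangle[OF uv assms(5) assms(3)] by blast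
  have "l1 = l2" using line_unique[OF assms(6)] l1 l2 by blast
  moreover have "t1 \<noteq> t2" using assms(7) .
  ultimately show False using on_line[OF l1(1) l1(4), of t2] l2(4) assms(1) by blast
qed

lemma lines_through:
  assumes "col p q1" "col p q2" "col p q3" "q1 \<noteq> q2" "q1 \<noteq> q3" "q2 \<noteq> q3"
    "\<not> col q1 q2" "\<not> col q1 q3" "\<not> col q2 q3" "m \<in> L" "p \<in> m"
  shows "q1 \<in> m \<or> q2 \<in> m \<or> q3 \<in> m"
proof -
  obtain l1 where l1: "l1 \<in> L" "p \<in> l1" "q1 \<in> l1" using col_line[OF assms(1)] by blast
  obtain l2 where l2: "l2 \<in> L" "p \<in> l2" "q2 \<in> l2" using col_line[OF assms(2)] by blast
  obtain l3 where l3: "l3 \<in> L" "p \<in> l3" "q3 \<in> l3" using col_line[OF assms(3)] by blast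
  have d1: "l1 \<noteq> l2"
  proof
    assume "l1 = l2"
    then have "q2 \<in> l1" using l2(3) by simp
    then have "col q1 q2" using on_line[OF l1(1) l1(3)] assms(4) by blast
    then show False using assms(7) by blast
  qed
  have d2: "l1 \<noteq> l3"
  proof
    assume "l1 = l3"
    then have "q3 \<in> l1" using l3(3) by simp
    then have "col q1 q3" using on_line[OF l1(1) l1(3)] assms(5) by blast
    then show False using assms(8) by blast
  qed
  have d3: "l2 \<noteq> l3"
  proof
    assume "l2 = l3"
    then have "q3 \<in> l2" using l3(3) by simp
    then have "col q2 q3" using on_line[OF l2(1) l2(3)] assms(6) by blast
    then show False using assms(9) by blast
  qed
  note d = d1 d2 d3
  have pP: "p \<in> P" using colP[OF assms(1)] by blast
  have sub: "{l1,l2,l3} \<subseteq> {l\<in>L. p \<in> l}" using l1 l2 l3 by blast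
  have c3: "card {l1,l2,l3} = 3" using d by simp
  have fin: "finite {l\<in>L. p \<in> l}" by (rule card_ge_0_finite) (simp add: pt3[OF pP])
  have "{l1,l2,l3} = {l\<in>L. p \<in> l}" by (rule card_subset_eq[OF fin sub]) (simp only: c3 pt3[OF pP])
  then have "m \<in> {l1,l2,l3}" using assms(10,11) by blast
  then show ?thesis using l1 l2 l3 by blast
qed

lemma line_lemma:
  assumes "{w1,w2,w3} \<in> L" "w1 \<noteq> w2" "w1 \<noteq> w3" "w2 \<noteq> w3" "a \<in> P"
    "a \<notin> perp P L w1" "a \<notin> perp P L w2"
  shows "a \<in> perp P L w3"
proof (cases "a \<in> {w1,w2,w3}")
  case True then show ?thesis using assms unfolding perp_def by auto
next
  case False
  then obtain c where c: "c \<in> {w1,w2,w3}" "col a c" using ax[OF assms(5) assms(1)] by blast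
  then show ?thesis using assms col_sym unfolding perp_def by auto
qed

lemma triad_lemma:
  assumes d: "u \<noteq> v" "u \<noteq> w" "v \<noteq> w" "x \<noteq> y" "x \<noteq> z" "y \<noteq> z"
    and nc: "\<not> col x y" "\<not> col x z" "\<not> col y z"
    and cu: "col u x" "col u y" "col u z"
    and cv: "col v x" "col v y" "col v z"
    and cw: "col w x" "col w y" "col w z"
    and aP: "a \<in> P" and nu: "a \<notin> perp P L u" and nv: "a \<notin> perp P L v"
  shows "a \<in> perp P L w"
proof (rule ccontr)
  assume nw: "a \<notin> perp P L w"
  have au: "a \<noteq> u" "\<not> col a u" "\<not> col u a" using nu unfolding perp_def using col_sym by auto
  have av: "a \<noteq> v" "\<not> col a v" "\<not> col v a" using nv unfolding perp_def using col_sym by auto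
  have aw: "a \<noteq> w" "\<not> col a w" "\<not> col w a" using nw unfolding perp_def using col_sym by auto
  have ncuv: "\<not> col u v" using noncol[OF nc(1) cu(1,2) cv(1,2) d(1) d(4)] .
  have ncuw: "\<not> col u w" using noncol[OF nc(1) cu(1,2) cw(1,2) d(2) d(4)] .
  have ncvw: "\<not> col v w" using noncol[OF nc(1) cv(1,2) cw(1,2) d(3) d(4)] .
  obtain lxu where lxu: "lxu \<in> L" "x \<in> lxu" "u \<in> lxu" using col_line[OF cu(1)] by blast
  have anl: "a \<notin> lxu" using on_line[OF lxu(1) _ lxu(3)] au by blast
  obtain c where c: "c \<in> lxu" "col a c" using ax[OF aP lxu(1) anl] by blast
  have cu': "c \<noteq> u" using c au by blast
  show False
  proof (cases "c = x")
    case True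
    obtain m where m: "m \<in> L" "a \<in> m" "x \<in> m" using col_line c True by blast
    have "u \<in> m \<or> v \<in> m \<or> w \<in> m"
      using lines_through[OF col_sym[OF cu(1)] col_sym[OF cv(1)] col_sym[OF cw(1)] d(1-3) ncuv ncuw ncvw m(1) m(3)] .
    then show False using on_line[OF m(1) m(2)] au av aw by blast
  next
    case False
    obtain l where l: "l \<in> L" "a \<in> l" "c \<in> l" using col_line c by blast
    have vP: "v \<in> P" "w \<in> P" "u \<in> P" using colP cv cw cu by auto
    have vnl: "v \<notin> l" using on_line[OF l(1) l(2)] av by blast
    have wnl: "w \<notin> l" using on_line[OF l(1) l(2)] aw by blast
    have unl: "u \<notin> l" using on_line[OF l(1) l(2)] au by blast
    have vnlxu: "v \<notin> lxu" using on_line[OF lxu(1) _ lxu(3)] ncuv d col_sym by metis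
    have wnlxu: "w \<notin> lxu" using on_line[OF lxu(1) _ lxu(3)] ncuw d col_sym by metis
    obtain dv where dv: "dv \<in> l" "col v dv" using ax[OF vP(1) l(1) vnl] by blast
    obtain dw where dw: "dw \<in> l" "col w dw" using ax[OF vP(2) l(1) wnl] by blast
    have dva: "dv \<noteq> a" using dv av col_sym by blast
    have dwa: "dw \<noteq> a" using dw aw col_sym by blast
    have dvc: "dv \<noteq> c"
    proof
      assume "dv = c"
      then show False using uniq[OF vP(1) lxu(1) vnlxu c(1) lxu(2) _ cv(1)] dv False by blast
    qed
    have dwc: "dw \<noteq> c"
    proof
      assume "dw = c"
      then show False using uniq[OF vP(2) lxu(1) wnlxu c(1) lxu(2) _ cw(1)] dw False by blast
    qed
    have ac: "a \<noteq> c" using c colP by blast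
    have "dv = dw"
    proof (rule ccontr)
      assume ne: "dv \<noteq> dw"
      have "{a,c,dv,dw} \<subseteq> l" using l dv dw by blast
      then have "card {a,c,dv,dw} \<le> 3" using card_mono[OF finl[OF l(1)]] line3[OF l(1)] by metis
      moreover have "card {a,c,dv,dw} = 4" using ne dva dwa dvc dwc ac by auto
      ultimately show False by simp
    qed
    define s where "s = dv"
    have sv: "col v s" and sw: "col w s" using dv dw \<open>dv = dw\<close> s_def by auto
    have su: "s \<noteq> u" using unl dv s_def by blast
    have cuc: "col u c" using on_line[OF lxu(1) lxu(3) c(1)] cu' by blast
    have nsu: "\<not> col u s"
    proof
      assume "col u s"
      then have "c = dv" using uniq[OF vP(3) l(1) unl l(3) dv(1) cuc] s_def by blast
      then show False using dvc by blast
    qed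
    obtain m where m: "m \<in> L" "v \<in> m" "s \<in> m" using col_line[OF sv] by blast
    have wnm: "w \<notin> m" using on_line[OF m(1) m(2)] ncvw d(3) by blast
    have key: "t \<in> m \<Longrightarrow> col w t \<Longrightarrow> col u t \<Longrightarrow> False" for t
    proof -
      assume tm: "t \<in> m" and wt: "col w t" and ut: "col u t"
      have "s = t" using uniq[OF vP(2) m(1) wnm m(3) tm sw wt] .
      then show False using nsu ut by blast
    qed
    have "x \<in> m \<or> y \<in> m \<or> z \<in> m"
      using lines_through[OF cv d(4-6) nc m(1) m(2)] .
    then show False using key cw cu by blast
  qed
qed

end

lemma perp_sym: "x \<in> perp P L y \<longleftrightarrow> y \<in> perp P L x"
  unfolding perp_def collinear_def by blast

lemma perp_col2:
  assumes "c \<in> perp P L a" "c \<in> perp P L b" "a \<noteq> b" "\<not> collinear P L a b"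
  shows "collinear P L c a"
  using assms unfolding perp_def collinear_def by blast

lemma triad_nc:
  assumes "triad P L T" "a \<in> T" "b \<in> T"
  shows "\<not> collinear P L a b"
proof -
  obtain x0 y0 z0 where t: "T = {x0, y0, z0}" "\<not> collinear P L x0 y0" "\<not> collinear P L x0 z0"
    "\<not> collinear P L y0 z0"
    using assms(1) unfolding triad_def by blast
  have sym: "collinear P L c d \<Longrightarrow> collinear P L d c" for c d unfolding collinear_def by blast
  have irr: "\<not> collinear P L c c" for c unfolding collinear_def by blast
  have "a = x0 \<or> a = y0 \<or> a = z0" "b = x0 \<or> b = y0 \<or> b = z0" using assms t by auto
  then show ?thesis using t sym irr by (elim disjE) metis+
qed

lemma iso_col:
  assumes iso: "geom_iso f P L P' L'" and g': "gq22 P' L'" and xy: "x \<in> P" "y \<in> P"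
    and c: "collinear P' L' (f x) (f y)"
  shows "collinear P L x y"
proof -
  obtain l' where l': "l' \<in> L'" "f x \<in> l'" "f y \<in> l'" "f x \<noteq> f y"
    using c unfolding collinear_def by blast
  have bij: "bij_betw f P P'" and iso2: "\<And>l. l \<subseteq> P \<Longrightarrow> (l \<in> L \<longleftrightarrow> f ` l \<in> L')"
    using iso unfolding geom_iso_def by auto
  have "l' \<subseteq> P'" using gq.lineP[OF gq.intro[OF g'] l'(1)] .
  then have l'P: "l' \<subseteq> f ` P" using bij bij_betw_imp_surj_on by blast
  define l where "l = {p\<in>P. f p \<in> l'}"
  have fl: "f ` l = l'" using l'P unfolding l_def by auto
  have lP: "l \<subseteq> P" unfolding l_def by blast
  have "l \<in> L" using iso2[OF lP] fl l'(1) by simp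
  moreover have "x \<in> l" "y \<in> l" "x \<noteq> y" using xy l' unfolding l_def by auto
  ultimately show ?thesis using xy unfolding collinear_def by blast
qed

lemma iso_line:
  assumes iso: "geom_iso f P L P' L'" and g: "gq22 P L" and T: "T \<in> L"
  shows "f ` T \<in> L'"
proof -
  have "\<forall>l. l \<subseteq> P \<longrightarrow> (l \<in> L \<longleftrightarrow> f ` l \<in> L')" using iso unfolding geom_iso_def by (rule conjunct2)
  then show ?thesis using gq.lineP[OF gq.intro[OF g] T] T by blast
qed

lemma dist3D: "has_dist R a b 3 \<Longrightarrow> (a, b) \<notin> R ^^ 2"
  unfolding has_dist_def by simp

lemma rel2I: "(a, m) \<in> R \<Longrightarrow> (m, b) \<in> R \<Longrightarrow> (a, b) \<in> R ^^ 2"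
  by (auto simp: numeral_2_eq_2)

lemma dist2I:
  assumes "(a, m) \<in> R" "(m, b) \<in> R" "a \<noteq> b" "(a, b) \<notin> R"
  shows "has_dist R a b 2"
  unfolding has_dist_def using assms rel2I[OF assms(1,2)]
  by (auto simp: numeral_2_eq_2 less_Suc_eq)

lemma spec_line: "(x, u) \<in> calP P L P' L' f \<Longrightarrow> {BS x, BPair x u, BS' u} \<in> blines P L P' L' f"
  unfolding blines_def by blast

lemma badjI: "l \<in> blines P L P' L' f \<Longrightarrow> a \<in> l \<Longrightarrow> b \<in> l \<Longrightarrow> a \<noteq> b \<Longrightarrow> (a, b) \<in> badj P L P' L' f"
  unfolding badj_def by blast

lemma adj1: "(x, u) \<in> calP P L P' L' f \<Longrightarrow> (BS x, BS' u) \<in> badj P L P' L' f"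
  by (rule badjI[OF spec_line]) auto
lemma adj2: "(x, u) \<in> calP P L P' L' f \<Longrightarrow> (BS' u, BPair x u) \<in> badj P L P' L' f"
  by (rule badjI[OF spec_line]) auto
lemma adj3: "(x, u) \<in> calP P L P' L' f \<Longrightarrow> (BS' u, BS x) \<in> badj P L P' L' f"
  by (rule badjI[OF spec_line]) auto
lemma adj4: "(x, u) \<in> calP P L P' L' f \<Longrightarrow> (BS x, BPair x u) \<in> badj P L P' L' f"
  by (rule badjI[OF spec_line]) auto

lemma nadj1: "(BS a, BPair z w) \<in> badj P L P' L' f \<Longrightarrow> z = a"
  unfolding badj_def blines_def calL_def by auto
lemma nadj2: "(BS' b, BPair z w) \<in> badj P L P' L' f \<Longrightarrow> w = b"
  unfolding badj_def blines_def calL_def by auto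

lemma core:
  fixes P :: "'a set" and L :: "'a set set" and P' :: "'b set" and L' :: "'b set set"
    and f :: "'a \<Rightarrow> 'b"
  assumes g: "gq22 P L" and g': "gq22 P' L'" and iso: "geom_iso f P L P' L'"
    and cP: "(x, u) \<in> calP P L P' L' f" "(y, v) \<in> calP P L P' L' f" "(z, w) \<in> calP P L P' L' f"
    and d: "x \<noteq> y" "x \<noteq> z" "y \<noteq> z" "u \<noteq> v" "u \<noteq> w" "v \<noteq> w"
    and T: "T = {x, y, z}" "T \<in> L \<or> complete_triad P L T"
    and U: "{u, v, w} = setperp P' L' (f ` T)"
    and \<alpha>: "\<alpha> \<in> BS ` P \<union> BS' ` P'"
    and d1: "has_dist (badj P L P' L' f) \<alpha> (BPair x u) 3"
    and d2: "has_dist (badj P L P' L' f) \<alpha> (BPair y v) 3"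
  shows "has_dist (badj P L P' L' f) \<alpha> (BPair z w) 2"
proof -
  interpret S: gq P L by (rule gq.intro[OF g])
  interpret S': gq P' L' by (rule gq.intro[OF g'])
  have bij: "bij_betw f P P'" using iso unfolding geom_iso_def by blast
  have xP: "x \<in> P" "y \<in> P" "z \<in> P" using cP unfolding calP_def by auto
  have fP: "f x \<in> P'" "f y \<in> P'" "f z \<in> P'" using xP bij bij_betw_apply by metis+
  have fd: "f x \<noteq> f y" "f x \<noteq> f z" "f y \<noteq> f z"
    using d xP bij unfolding bij_betw_def inj_on_def by metis+
  have fT: "f ` T = {f x, f y, f z}" using T by auto
  have Uu: "u \<in> perp P' L' (f x)" "u \<in> perp P' L' (f y)" "u \<in> perp P' L' (f z)"
    and Uv: "v \<in> perp P' L' (f x)" "v \<in> perp P' L' (f y)" "v \<in> perp P' L' (f z)"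
    and Uw: "w \<in> perp P' L' (f x)" "w \<in> perp P' L' (f y)" "w \<in> perp P' L' (f z)"
    and UP: "u \<in> P'" "v \<in> P'" "w \<in> P'"
    using U fT unfolding setperp_def by blast+
  have keys: "(\<forall>c\<in>P'. c \<notin> perp P' L' u \<longrightarrow> c \<notin> perp P' L' v \<longrightarrow> c \<in> perp P' L' w) \<and>
     (\<forall>c\<in>P'. c \<notin> perp P' L' (f x) \<longrightarrow> c \<notin> perp P' L' (f y) \<longrightarrow> c \<in> perp P' L' (f z))"
  proof (cases "T \<in> L")
    case True
    have TL: "{f x, f y, f z} \<in> L'" using iso_line[OF iso g True] fT by simp
    have sub: "{u, v, w} \<subseteq> {f x, f y, f z}"
    proof -
      have "c \<in> {f x, f y, f z}" if "c \<in> perp P' L' (f x)" "c \<in> perp P' L' (f y)" "c \<in> P'" for c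
      proof (rule ccontr)
        assume nc: "c \<notin> {f x, f y, f z}"
        then have "S'.col c (f x)" "S'.col c (f y)" using that unfolding perp_def
          using S'.col_sym by auto
        then show False using S'.uniq[OF that(3) TL nc] fd by blast
      qed
      then show ?thesis using Uu Uv Uw UP by blast
    qed
    have "card {u, v, w} = 3" using d by simp
    then have "{u, v, w} = {f x, f y, f z}"
      using card_subset_eq[OF S'.finl[OF TL] sub] S'.line3[OF TL] by simp
    then have UL: "{u, v, w} \<in> L'" using TL by simp
    show ?thesis using S'.line_lemma[OF UL d(4-6)] S'.line_lemma[OF TL fd] by blast
  next
    case False
    then have tr: "triad P L T" using T unfolding complete_triad_def by blast
    have nc: "\<not> S'.col (f x) (f y)" "\<not> S'.col (f x) (f z)" "\<not> S'.col (f y) (f z)"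
      using triad_nc[OF tr] iso_col[OF iso g'] xP T by blast+
    have cu: "S'.col u (f x)" "S'.col u (f y)" "S'.col u (f z)"
      using perp_col2[OF Uu(1,2) fd(1) nc(1)] perp_col2[OF Uu(2,1) fd(1)[symmetric]]
        perp_col2[OF Uu(3,1) fd(2)[symmetric]] nc S'.col_sym by blast+
    have cv: "S'.col v (f x)" "S'.col v (f y)" "S'.col v (f z)"
      using perp_col2[OF Uv(1,2) fd(1) nc(1)] perp_col2[OF Uv(2,1) fd(1)[symmetric]]
        perp_col2[OF Uv(3,1) fd(2)[symmetric]] nc S'.col_sym by blast+
    have cw: "S'.col w (f x)" "S'.col w (f y)" "S'.col w (f z)"
      using perp_col2[OF Uw(1,2) fd(1) nc(1)] perp_col2[OF Uw(2,1) fd(1)[symmetric]]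
        perp_col2[OF Uw(3,1) fd(2)[symmetric]] nc S'.col_sym by blast+
    have ncuv: "\<not> S'.col u v" using S'.noncol[OF nc(1) cu(1,2) cv(1,2) d(4) fd(1)] .
    have ncuw: "\<not> S'.col u w" using S'.noncol[OF nc(1) cu(1,2) cw(1,2) d(5) fd(1)] .
    have ncvw: "\<not> S'.col v w" using S'.noncol[OF nc(1) cv(1,2) cw(1,2) d(6) fd(1)] .
    show ?thesis
      using S'.triad_lemma[OF d(4-6) fd nc cu cv cw]
        S'.triad_lemma[OF fd d(4-6) ncuv ncuw ncvw
          S'.col_sym[OF cu(1)] S'.col_sym[OF cv(1)] S'.col_sym[OF cw(1)]
          S'.col_sym[OF cu(2)] S'.col_sym[OF cv(2)] S'.col_sym[OF cw(2)]
          S'.col_sym[OF cu(3)] S'.col_sym[OF cv(3)] S'.col_sym[OF cw(3)]] by blast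
  qed
  show ?thesis
  proof (cases "\<alpha> \<in> BS ` P")
    case True
    then obtain a where a: "a \<in> P" "\<alpha> = BS a" by blast
    have faP: "f a \<in> P'" using a bij bij_betw_apply by metis
    have nu: "u \<notin> perp P' L' (f a)"
    proof
      assume "u \<in> perp P' L' (f a)"
      then have "(a, u) \<in> calP P L P' L' f" using a unfolding calP_def by blast
      then show False using dist3D[OF d1] rel2I[OF adj1 adj2[OF cP(1)]] a by blast
    qed
    have nv: "v \<notin> perp P' L' (f a)"
    proof
      assume "v \<in> perp P' L' (f a)"
      then have "(a, v) \<in> calP P L P' L' f" using a unfolding calP_def by blast
      then show False using dist3D[OF d2] rel2I[OF adj1 adj2[OF cP(2)]] a by blast
    qed
    have "w \<in> perp P' L' (f a)" using keys faP nu nv perp_sym by metis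
    then have aw: "(a, w) \<in> calP P L P' L' f" using a unfolding calP_def by blast
    show ?thesis
    proof (rule dist2I[OF adj1[OF aw] adj2[OF cP(3)], folded a(2)])
      show "\<alpha> \<noteq> BPair z w" using a by simp
      show "(\<alpha>, BPair z w) \<notin> badj P L P' L' f"
      proof
        assume "(\<alpha>, BPair z w) \<in> badj P L P' L' f"
        then have "z = a" using nadj1 a by metis
        then show False using nu Uu by blast
      qed
    qed
  next
    case False
    then obtain b where b: "b \<in> P'" "\<alpha> = BS' b" using \<alpha> by blast
    have nx: "b \<notin> perp P' L' (f x)"
    proof
      assume "b \<in> perp P' L' (f x)"
      then have "(x, b) \<in> calP P L P' L' f" using xP unfolding calP_def by blast
      then show False using dist3D[OF d1] rel2I[OF adj3 adj4[OF cP(1)]] b by blast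
    qed
    have ny: "b \<notin> perp P' L' (f y)"
    proof
      assume "b \<in> perp P' L' (f y)"
      then have "(y, b) \<in> calP P L P' L' f" using xP unfolding calP_def by blast
      then show False using dist3D[OF d2] rel2I[OF adj3 adj4[OF cP(2)]] b by blast
    qed
    have "b \<in> perp P' L' (f z)" using keys b nx ny by blast
    then have zb: "(z, b) \<in> calP P L P' L' f" using xP unfolding calP_def by blast
    show ?thesis
    proof (rule dist2I[OF adj3[OF zb] adj4[OF cP(3)], folded b(2)])
      show "\<alpha> \<noteq> BPair z w" using b by simp
      show "(\<alpha>, BPair z w) \<notin> badj P L P' L' f"
      proof
        assume "(\<alpha>, BPair z w) \<in> badj P L P' L' f"
        then have "w = b" using nadj2 b by metis
        then show False using nx Uw by blast
      qed
    qed
  qed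
qed

theorem proposition4p8:
  fixes P :: "'a set" and L :: "'a set set" and P' :: "'b set" and L' :: "'b set set"
    and f :: "'a \<Rightarrow> 'b"
  assumes "gq22 P L" and "gq22 P' L'" and "geom_iso f P L P' L'"
    and "Ln \<in> calL P L P' L' f"
    and "\<alpha> \<in> BS ` P \<union> BS' ` P'"
    and "p \<in> Ln" and "q \<in> Ln" and "r \<in> Ln"
    and "p \<noteq> q" and "p \<noteq> r" and "q \<noteq> r"
    and "has_dist (badj P L P' L' f) \<alpha> p 3" and "has_dist (badj P L P' L' f) \<alpha> q 3"
  shows "has_dist (badj P L P' L' f) \<alpha> r 2"
proof -
  obtain x y z u v w where Ln: "Ln = {BPair x u, BPair y v, BPair z w}"
    and cP: "(x, u) \<in> calP P L P' L' f" "(y, v) \<in> calP P L P' L' f" "(z, w) \<in> calP P L P' L' f"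
    and d: "x \<noteq> y" "x \<noteq> z" "y \<noteq> z" "u \<noteq> v" "u \<noteq> w" "v \<noteq> w"
    and T: "{x, y, z} \<in> L \<or> complete_triad P L {x, y, z}"
    and U: "{u, v, w} = setperp P' L' (f ` {x, y, z})"
    using assms(4) unfolding calL_def by blast
  define T where "T = {x, y, z}"
  have T1: "T = {x,y,z}" "T = {x,z,y}" "T = {y,x,z}" "T = {y,z,x}" "T = {z,x,y}" "T = {z,y,x}"
    unfolding T_def by auto
  have T2: "T \<in> L \<or> complete_triad P L T" using T T_def by simp
  have U1: "{u,v,w} = setperp P' L' (f ` T)" "{u,w,v} = setperp P' L' (f ` T)"
    "{v,u,w} = setperp P' L' (f ` T)" "{v,w,u} = setperp P' L' (f ` T)"
    "{w,u,v} = setperp P' L' (f ` T)" "{w,v,u} = setperp P' L' (f ` T)"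
    using U unfolding T_def by (auto simp: insert_commute)
  note C = core[OF assms(1-3)]
  consider (ka) "p = BPair x u" "q = BPair y v" "r = BPair z w"
    | (kb) "p = BPair y v" "q = BPair x u" "r = BPair z w"
    | (kc) "p = BPair x u" "q = BPair z w" "r = BPair y v"
    | (kd) "p = BPair z w" "q = BPair x u" "r = BPair y v"
    | (ke) "p = BPair y v" "q = BPair z w" "r = BPair x u"
    | (kf) "p = BPair z w" "q = BPair y v" "r = BPair x u"
    using assms(6-11) unfolding Ln by auto
  then show ?thesis
  proof cases
    case ka
    show ?thesis using C[OF cP(1) cP(2) cP(3) d(1) d(2) d(3) d(4) d(5) d(6) T1(1) T2 U1(1) assms(5)] assms(12,13) ka by simp
  next
    case kb
    show ?thesis using C[OF cP(2) cP(1) cP(3) d(1)[symmetric] d(3) d(2) d(4)[symmetric] d(6) d(5) T1(3) T2 U1(3) assms(5)] assms(12,13) kb by simp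
  next
    case kc
    show ?thesis using C[OF cP(1) cP(3) cP(2) d(2) d(1) d(3)[symmetric] d(5) d(4) d(6)[symmetric] T1(2) T2 U1(2) assms(5)] assms(12,13) kc by simp
  next
    case kd
    show ?thesis using C[OF cP(3) cP(1) cP(2) d(2)[symmetric] d(3)[symmetric] d(1) d(5)[symmetric] d(6)[symmetric] d(4) T1(5) T2 U1(5) assms(5)] assms(12,13) kd by simp
  next
    case ke
    show ?thesis using C[OF cP(2) cP(3) cP(1) d(3) d(1)[symmetric] d(2)[symmetric] d(6) d(4)[symmetric] d(5)[symmetric] T1(4) T2 U1(4) assms(5)] assms(12,13) ke by simp
  next
    case kf
    show ?thesis using C[OF cP(3) cP(2) cP(1) d(3)[symmetric] d(2)[symmetric] d(1)[symmetric] d(6)[symmetric] d(5)[symmetric] d(4)[symmetric] T1(6) T2 U1(6) assms(5)] assms(12,13) kf by simp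
  qed
qed

end
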